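(* Let $N\geq2$. For all integers $n,m$ such that none of $n+m$, $n-m$ is divisible by $2N$, $$[H^0_n,H^0_m]=2\sin\!\Bigl(\pi\tfrac{n-m}{2N}\Bigr)H^1_{n+m}+2\sin\!\Bigl(\pi\tfrac{n+m}{2N}\Bigr)H^1_{n-m}.$$
   Context: On $\mathcal{H}_N=(\mathbb{C}^2)^{\otimes N}$ let $c_j^\dagger=i^{j-1}\,i^{\sigma^z_1+\dots+\sigma^z_{j-1}}\sigma^+_j$, $c_j=i^{-j+1}\,i^{-\sigma^z_1-\dots-\sigma^z_{j-1}}\sigma^-_j$ (Jordan–Wigner fermions; $\sigma^a_j$ Pauli matrices on site $j$, $\sigma^\pm$ the raising/lowering matrices), and $e_j=c_jc_{j+1}^\dagger+c_{j+1}c_j^\dagger+i(c_j^\dagger c_j-c_{j+1}^\dagger c_{j+1})$, $1\leq j\leq N-1$. For $n\in\mathbb{Z}$ set $H^0_n=\sum_{j=1}^{N-1}\cos(\pi nj/N)\,e_j$, and for $k\in\mathbb{Z}$ not divisible by $2N$ define $H^1_k$ by $[H^0_0,H^0_k]=-4\sin(\pi\tfrac{k}{2N})H^1_k$. *)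

theory Defs
  imports "HOL-Analysis.Analysis" "Jordan_Normal_Form.Matrix"
begin

text \<open>Operators on the N-site spin chain (C^2)^{\<otimes>N} are complex 2^N x 2^N matrices.
  Basis index s < 2^N; bit (j-1) of s is the state of site j (bit 0 = spin up, bit 1 = spin down).\<close>

definition dimH :: "nat \<Rightarrow> nat" where "dimH N = 2 ^ N"

definition sbit :: "nat \<Rightarrow> nat \<Rightarrow> nat" where "sbit s k = s div 2 ^ k mod 2"

definition site_op :: "nat \<Rightarrow> nat \<Rightarrow> complex mat \<Rightarrow> complex mat" where
  "site_op N j A = mat (dimH N) (dimH N) (\<lambda>(r, c).
     if (\<forall>k<N. k \<noteq> j - 1 \<longrightarrow> sbit r k = sbit c k)
     then A $$ (sbit r (j - 1), sbit c (j - 1)) else 0)"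

definition pauli_z :: "complex mat" where "pauli_z = mat_of_rows_list 2 [[1, 0], [0, -1]]"
definition pauli_plus :: "complex mat" where "pauli_plus = mat_of_rows_list 2 [[0, 1], [0, 0]]"
definition pauli_minus :: "complex mat" where "pauli_minus = mat_of_rows_list 2 [[0, 0], [1, 0]]"

definition sz :: "nat \<Rightarrow> nat \<Rightarrow> complex mat" where "sz N j = site_op N j pauli_z"
definition splus :: "nat \<Rightarrow> nat \<Rightarrow> complex mat" where "splus N j = site_op N j pauli_plus"
definition sminus :: "nat \<Rightarrow> nat \<Rightarrow> complex mat" where "sminus N j = site_op N j pauli_minus"

definition op_sum :: "nat \<Rightarrow> ('i \<Rightarrow> complex mat) \<Rightarrow> 'i set \<Rightarrow> complex mat" where
  "op_sum N f J = mat (dimH N) (dimH N) (\<lambda>(r, c). \<Sum>j\<in>J. f j $$ (r, c))"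

text \<open>Functional calculus for a diagonal (in the computational basis) operator.\<close>
definition diag_fun :: "(complex \<Rightarrow> complex) \<Rightarrow> complex mat \<Rightarrow> complex mat" where
  "diag_fun f A = mat (dim_row A) (dim_row A) (\<lambda>(r, c). if r = c then f (A $$ (r, r)) else 0)"

definition sz_string :: "nat \<Rightarrow> nat \<Rightarrow> complex mat" where
  "sz_string N j = op_sum N (\<lambda>k. sz N k) {1..<j}"

definition cdag :: "nat \<Rightarrow> nat \<Rightarrow> complex mat" where
  "cdag N j = (\<i> ^ (j - 1)) \<cdot>\<^sub>m (diag_fun (\<lambda>x. \<i> powr x) (sz_string N j) * splus N j)"

definition cann :: "nat \<Rightarrow> nat \<Rightarrow> complex mat" where
  "cann N j = (\<i> powi (1 - int j)) \<cdot>\<^sub>m (diag_fun (\<lambda>x. \<i> powr (- x)) (sz_string N j) * sminus N j)"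

definition e_gen :: "nat \<Rightarrow> nat \<Rightarrow> complex mat" where
  "e_gen N j = cann N j * cdag N (j + 1) + cann N (j + 1) * cdag N j
     + \<i> \<cdot>\<^sub>m (cdag N j * cann N j - cdag N (j + 1) * cann N (j + 1))"

definition comm :: "complex mat \<Rightarrow> complex mat \<Rightarrow> complex mat" where
  "comm A B = A * B - B * A"

definition H0 :: "nat \<Rightarrow> int \<Rightarrow> complex mat" where
  "H0 N n = op_sum N (\<lambda>j. complex_of_real (cos (pi * real_of_int n * real j / real N)) \<cdot>\<^sub>m e_gen N j) {1..N-1}"

text \<open>H^1_k is the unique operator with [H^0_0, H^0_k] = -4 sin(pi k/(2N)) H^1_k
  (well defined since the sine is nonzero when 2N does not divide k).\<close>
definition H1 :: "nat \<Rightarrow> int \<Rightarrow> complex mat" where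
  "H1 N k = complex_of_real (- 1 / (4 * sin (pi * real_of_int k / (2 * real N)))) \<cdot>\<^sub>m comm (H0 N 0) (H0 N k)"

end

theory Submission
  imports Defs
begin


lemma sbit_lt2: "sbit s k < 2" by (simp add: sbit_def)
lemma sbit_cases: "sbit s k = 0 \<or> sbit s k = 1" by (auto simp: sbit_def)
lemma sbit_0: "sbit s 0 = s mod 2" by (simp add: sbit_def)
lemma sbit_Suc: "sbit s (Suc k) = sbit (s div 2) k"
  by (simp add: sbit_def div_mult2_eq)

lemma bits_eq:
  "a < 2^N \<Longrightarrow> b < 2^N \<Longrightarrow> (\<And>k. k < N \<Longrightarrow> sbit a k = sbit b k) \<Longrightarrow> a = b"
proof (induction N arbitrary: a b)
  case 0 then show ?case by simp
next
  case (Suc N)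
  have m: "a mod 2 = b mod 2" using Suc.prems(3)[of 0] by (simp add: sbit_0)
  have d: "a div 2 = b div 2"
    apply (rule Suc.IH)
    using Suc.prems by (auto simp: sbit_Suc[symmetric])
  show ?case using m d by (metis div_mult_mod_eq)
qed

fun bnum :: "nat \<Rightarrow> (nat \<Rightarrow> nat) \<Rightarrow> nat" where
  "bnum 0 f = 0"
| "bnum (Suc N) f = f 0 + 2 * bnum N (\<lambda>k. f (Suc k))"

lemma bnum_lt: "(\<And>k. f k < 2) \<Longrightarrow> bnum N f < 2^N"
proof (induction N arbitrary: f)
  case 0 then show ?case by simp
next
  case (Suc N)
  have "bnum N (\<lambda>k. f (Suc k)) < 2^N" using Suc by auto
  moreover have "f 0 < 2" using Suc by auto
  ultimately show ?case by simp
qed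

lemma bnum_bit: "(\<And>k. f k < 2) \<Longrightarrow> k < N \<Longrightarrow> sbit (bnum N f) k = f k"
proof (induction N arbitrary: f k)
  case 0 then show ?case by simp
next
  case (Suc N)
  have f0: "f 0 < 2" using Suc by auto
  show ?case
  proof (cases k)
    case 0 then show ?thesis using f0 by (simp add: sbit_0)
  next
    case (Suc k')
    have "(f 0 + 2 * bnum N (\<lambda>k. f (Suc k))) div 2 = bnum N (\<lambda>k. f (Suc k))"
      using f0 by simp
    then show ?thesis using Suc.IH[of "\<lambda>k. f (Suc k)" k'] Suc.prems Suc
      by (simp add: sbit_Suc)
  qed
qed

definition agree :: "nat \<Rightarrow> nat set \<Rightarrow> nat \<Rightarrow> nat \<Rightarrow> bool" where
  "agree N T r c \<longleftrightarrow> (\<forall>k<N. k \<notin> T \<longrightarrow> sbit r k = sbit c k)"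

lemma mult_entry:
  assumes "A \<in> carrier_mat D D" "B \<in> carrier_mat D D" "r < D" "c < D"
  shows "(A * B) $$ (r, c) = (\<Sum>k<D. A $$ (r, k) * B $$ (k, c))"
  using assms by (auto simp: scalar_prod_def lessThan_atLeast0 intro!: sum.cong)

lemma mult_entry_single:
  assumes "A \<in> carrier_mat D D" "B \<in> carrier_mat D D" "r < D" "c < D" "k0 < D"
    and "\<And>k. k < D \<Longrightarrow> k \<noteq> k0 \<Longrightarrow> A $$ (r, k) * B $$ (k, c) = 0"
  shows "(A * B) $$ (r, c) = A $$ (r, k0) * B $$ (k0, c)"
proof -
  have "(A * B) $$ (r, c) = (\<Sum>k<D. A $$ (r, k) * B $$ (k, c))"
    using mult_entry assms by blast
  also have "\<dots> = (\<Sum>k<D. if k = k0 then A $$ (r, k) * B $$ (k, c) else 0)"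
    using assms(6) by (intro sum.cong) auto
  also have "\<dots> = A $$ (r, k0) * B $$ (k0, c)" using assms(5) by simp
  finally show ?thesis .
qed

lemma local_commute_aux:
  fixes N :: nat
  defines "D \<equiv> dimH N"
  assumes A: "A \<in> carrier_mat D D" and B: "B \<in> carrier_mat D D"
    and Az: "\<And>r c. r < D \<Longrightarrow> c < D \<Longrightarrow> \<not> agree N T r c \<Longrightarrow> A $$ (r, c) = 0"
    and Bz: "\<And>r c. r < D \<Longrightarrow> c < D \<Longrightarrow> \<not> agree N U r c \<Longrightarrow> B $$ (r, c) = 0"
    and TU: "T \<inter> U = {}"
    and r: "r < D" and c: "c < D"
  shows "(A * B) $$ (r, c) = A $$ (r, bnum N (\<lambda>i. if i \<in> T then sbit c i else sbit r i))
                           * B $$ (bnum N (\<lambda>i. if i \<in> T then sbit c i else sbit r i), c)"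
proof -
  define f where "f = (\<lambda>i. if i \<in> T then sbit c i else sbit r i)"
  have f2: "\<And>i. f i < 2" by (simp add: f_def sbit_lt2)
  have k1: "bnum N f < D" using bnum_lt[OF f2] by (simp add: D_def dimH_def)
  have bk: "\<And>i. i < N \<Longrightarrow> sbit (bnum N f) i = f i" by (rule bnum_bit[OF f2])
  show ?thesis unfolding f_def[symmetric]
  proof (rule mult_entry_single[OF A B r c k1])
    fix k assume k: "k < D" "k \<noteq> bnum N f"
    have "\<exists>i<N. sbit k i \<noteq> sbit (bnum N f) i"
    proof (rule ccontr)
      assume "\<not> (\<exists>i<N. sbit k i \<noteq> sbit (bnum N f) i)"
      then have "k = bnum N f" using bits_eq[of k N "bnum N f"] k k1 unfolding D_def dimH_def
        by blast
      then show False using k by simp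
    qed
    then obtain i where i: "i < N" "sbit k i \<noteq> sbit (bnum N f) i" by blast
    show "A $$ (r, k) * B $$ (k, c) = 0"
    proof (cases "i \<in> T")
      case True
      then have "i \<notin> U" using TU by auto
      then have "\<not> agree N U k c" using i bk[of i] True unfolding agree_def f_def by auto
      then show ?thesis using Bz k c by simp
    next
      case False
      then have "\<not> agree N T r k" using i bk[of i] unfolding agree_def f_def by auto
      then show ?thesis using Az k r by simp
    qed
  qed
qed

definition local_op :: "nat \<Rightarrow> nat set \<Rightarrow> complex mat \<Rightarrow> bool" where
  "local_op N T A \<longleftrightarrow> A \<in> carrier_mat (dimH N) (dimH N)
    \<and> (\<forall>r<dimH N. \<forall>c<dimH N. \<not> agree N T r c \<longrightarrow> A $$ (r, c) = 0)
    \<and> (\<forall>r c r' c'. r < dimH N \<longrightarrow> c < dimH N \<longrightarrow> r' < dimH N \<longrightarrow> c' < dimH N \<longrightarrow>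
         agree N T r c \<longrightarrow> agree N T r' c' \<longrightarrow>
         (\<forall>k\<in>T. sbit r k = sbit r' k \<and> sbit c k = sbit c' k) \<longrightarrow> A $$ (r, c) = A $$ (r', c'))"

lemma local_commute:
  assumes LA: "local_op N T A" and LB: "local_op N U B" and TU: "T \<inter> U = {}"
  shows "A * B = B * A"
proof -
  define D where "D = dimH N"
  have A: "A \<in> carrier_mat D D" and B: "B \<in> carrier_mat D D"
    using LA LB by (auto simp: local_op_def D_def)
  have Az: "\<And>r c. r < D \<Longrightarrow> c < D \<Longrightarrow> \<not> agree N T r c \<Longrightarrow> A $$ (r, c) = 0"
    using LA unfolding local_op_def D_def by blast
  have Bz: "\<And>r c. r < D \<Longrightarrow> c < D \<Longrightarrow> \<not> agree N U r c \<Longrightarrow> B $$ (r, c) = 0"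
    using LB unfolding local_op_def D_def by blast
  have Ai: "\<And>r c r' c'. r < D \<Longrightarrow> c < D \<Longrightarrow> r' < D \<Longrightarrow> c' < D \<Longrightarrow>
         agree N T r c \<Longrightarrow> agree N T r' c' \<Longrightarrow>
         (\<forall>k\<in>T. sbit r k = sbit r' k \<and> sbit c k = sbit c' k) \<Longrightarrow> A $$ (r, c) = A $$ (r', c')"
    using LA unfolding local_op_def D_def by blast
  have Bi: "\<And>r c r' c'. r < D \<Longrightarrow> c < D \<Longrightarrow> r' < D \<Longrightarrow> c' < D \<Longrightarrow>
         agree N U r c \<Longrightarrow> agree N U r' c' \<Longrightarrow>
         (\<forall>k\<in>U. sbit r k = sbit r' k \<and> sbit c k = sbit c' k) \<Longrightarrow> B $$ (r, c) = B $$ (r', c')"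
    using LB unfolding local_op_def D_def by blast
  have UT: "U \<inter> T = {}" using TU by blast
  show ?thesis
  proof (rule eq_matI)
    show "dim_row (A * B) = dim_row (B * A)" "dim_col (A * B) = dim_col (B * A)" using A B by auto
    fix r c assume "r < dim_row (B * A)" "c < dim_col (B * A)"
    then have r: "r < D" and c: "c < D" using A B by auto
    define f1 where "f1 = (\<lambda>i. if i \<in> T then sbit c i else sbit r i)"
    define f2 where "f2 = (\<lambda>i. if i \<in> U then sbit c i else sbit r i)"
    define k1 where "k1 = bnum N f1"
    define k2 where "k2 = bnum N f2"
    have f1l: "\<And>i. f1 i < 2" by (simp add: f1_def sbit_lt2)
    have f2l: "\<And>i. f2 i < 2" by (simp add: f2_def sbit_lt2)
    have k1D: "k1 < D" using bnum_lt[OF f1l] by (simp add: k1_def D_def dimH_def)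
    have k2D: "k2 < D" using bnum_lt[OF f2l] by (simp add: k2_def D_def dimH_def)
    have b1: "\<And>i. i < N \<Longrightarrow> sbit k1 i = f1 i" unfolding k1_def by (rule bnum_bit[OF f1l])
    have b2: "\<And>i. i < N \<Longrightarrow> sbit k2 i = f2 i" unfolding k2_def by (rule bnum_bit[OF f2l])
    have AB: "(A * B) $$ (r, c) = A $$ (r, k1) * B $$ (k1, c)"
      using local_commute_aux[of A N B T U r c] A B Az Bz TU r c
      unfolding k1_def f1_def D_def by blast
    have BA: "(B * A) $$ (r, c) = B $$ (r, k2) * A $$ (k2, c)"
      using local_commute_aux[of B N A U T r c] A B Az Bz UT r c
      unfolding k2_def f2_def D_def by blast
    show "(A * B) $$ (r, c) = (B * A) $$ (r, c)"
    proof (cases "agree N (T \<union> U) r c")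
      case True
      have "A $$ (r, k1) = A $$ (k2, c)"
      proof (rule Ai[OF r k1D k2D c])
        show "agree N T r k1" using b1 unfolding agree_def f1_def by auto
        show "agree N T k2 c" using b2 True unfolding agree_def f2_def by auto
        show "\<forall>k\<in>T. sbit r k = sbit k2 k \<and> sbit k1 k = sbit c k"
        proof
          fix k assume k: "k \<in> T"
          show "sbit r k = sbit k2 k \<and> sbit k1 k = sbit c k"
          proof (cases "k < N")
            case True then show ?thesis using b1 b2 k UT unfolding f1_def f2_def by auto
          next
            case False
            have "sbit x k = 0" if "x < D" for x
            proof -
              have "x < 2^k" using that False unfolding D_def dimH_def
                by (meson less_le_trans not_le power_increasing_iff one_less_numeral_iff semiring_norm(76))
              then show ?thesis by (simp add: sbit_def)
            qed
            then show ?thesis using r c k1D k2D by simp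
          qed
        qed
      qed
      moreover have "B $$ (k1, c) = B $$ (r, k2)"
      proof (rule Bi[OF k1D c r k2D])
        show "agree N U k1 c" using b1 True unfolding agree_def f1_def by auto
        show "agree N U r k2" using b2 unfolding agree_def f2_def by auto
        show "\<forall>k\<in>U. sbit k1 k = sbit r k \<and> sbit c k = sbit k2 k"
        proof
          fix k assume k: "k \<in> U"
          show "sbit k1 k = sbit r k \<and> sbit c k = sbit k2 k"
          proof (cases "k < N")
            case True then show ?thesis using b1 b2 k TU unfolding f1_def f2_def by auto
          next
            case False
            have "sbit x k = 0" if "x < D" for x
            proof -
              have "x < 2^k" using that False unfolding D_def dimH_def
                by (meson less_le_trans not_le power_increasing_iff one_less_numeral_iff semiring_norm(76))
              then show ?thesis by (simp add: sbit_def)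
            qed
            then show ?thesis using r c k1D k2D by simp
          qed
        qed
      qed
      ultimately show ?thesis using AB BA by simp
    next
      case False
      then obtain i where i: "i < N" "i \<notin> T" "i \<notin> U" "sbit r i \<noteq> sbit c i"
        unfolding agree_def by auto
      have "\<not> agree N U k1 c" using i b1[of i] unfolding agree_def f1_def by auto
      then have "B $$ (k1, c) = 0" using Bz k1D c by blast
      moreover have "\<not> agree N T k2 c" using i b2[of i] unfolding agree_def f2_def by auto
      then have "A $$ (k2, c) = 0" using Az k2D c by blast
      ultimately show ?thesis using AB BA by simp
    qed
  qed
qed



lemma less2_cases: "(x::nat) < 2 \<Longrightarrow> x = 0 \<or> x = 1" by auto

lemma site_op_entry:
  "r < dimH N \<Longrightarrow> c < dimH N \<Longrightarrow> site_op N j A $$ (r, c) =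
     (if agree N {j - 1} r c then A $$ (sbit r (j - 1), sbit c (j - 1)) else 0)"
  by (simp add: site_op_def agree_def)

lemma site_op_carrier: "site_op N j A \<in> carrier_mat (dimH N) (dimH N)"
  by (simp add: site_op_def)

lemma pauli_plus_entry: "a < 2 \<Longrightarrow> b < 2 \<Longrightarrow> pauli_plus $$ (a, b) = (if a = 0 \<and> b = 1 then 1 else 0)"
  using less2_cases[of a] less2_cases[of b]
  by (auto simp: pauli_plus_def mat_of_rows_list_def)

lemma pauli_minus_entry: "a < 2 \<Longrightarrow> b < 2 \<Longrightarrow> pauli_minus $$ (a, b) = (if a = 1 \<and> b = 0 then 1 else 0)"
  using less2_cases[of a] less2_cases[of b]
  by (auto simp: pauli_minus_def mat_of_rows_list_def)

lemma pauli_z_entry: "a < 2 \<Longrightarrow> pauli_z $$ (a, a) = (if a = 0 then 1 else -1)"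
  using less2_cases[of a]
  by (auto simp: pauli_z_def mat_of_rows_list_def)

lemma splus_entry: "r < dimH N \<Longrightarrow> c < dimH N \<Longrightarrow> splus N j $$ (r, c) =
   (if agree N {j - 1} r c \<and> sbit r (j - 1) = 0 \<and> sbit c (j - 1) = 1 then 1 else 0)"
  by (simp add: splus_def site_op_entry pauli_plus_entry sbit_lt2)

lemma sminus_entry: "r < dimH N \<Longrightarrow> c < dimH N \<Longrightarrow> sminus N j $$ (r, c) =
   (if agree N {j - 1} r c \<and> sbit r (j - 1) = 1 \<and> sbit c (j - 1) = 0 then 1 else 0)"
  by (simp add: sminus_def site_op_entry pauli_minus_entry sbit_lt2)

lemma sz_diag: "r < dimH N \<Longrightarrow> sz N k $$ (r, r) = (if sbit r (k - 1) = 0 then 1 else -1)"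
  by (simp add: sz_def site_op_entry pauli_z_entry sbit_lt2 agree_def)

definition Sc :: "nat \<Rightarrow> nat \<Rightarrow> complex" where
  "Sc r j = (\<Sum>k\<in>{1..<j}. if sbit r (k - 1) = 0 then 1 else -1)"

lemma sz_string_diag: "r < dimH N \<Longrightarrow> sz_string N j $$ (r, r) = Sc r j"
  by (simp add: sz_string_def op_sum_def Sc_def sz_diag)

lemma sz_string_dim: "dim_row (sz_string N j) = dimH N"
  by (simp add: sz_string_def op_sum_def)

lemma diag_mult_entry:
  assumes "dim_row A = D" "B \<in> carrier_mat D D" "r < D" "c < D"
  shows "(diag_fun f A * B) $$ (r, c) = f (A $$ (r, r)) * B $$ (r, c)"
proof -
  have C: "diag_fun f A \<in> carrier_mat D D" using assms by (simp add: diag_fun_def)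
  have "(diag_fun f A * B) $$ (r, c) = (\<Sum>k<D. diag_fun f A $$ (r, k) * B $$ (k, c))"
    by (rule mult_entry[OF C assms(2-4)])
  also have "\<dots> = (\<Sum>k<D. if k = r then f (A $$ (r, r)) * B $$ (k, c) else 0)"
    using assms by (intro sum.cong) (auto simp: diag_fun_def)
  also have "\<dots> = f (A $$ (r, r)) * B $$ (r, c)" using assms by simp
  finally show ?thesis .
qed

lemma splus_carrier: "splus N j \<in> carrier_mat (dimH N) (dimH N)"
  by (simp add: splus_def site_op_carrier)
lemma sminus_carrier: "sminus N j \<in> carrier_mat (dimH N) (dimH N)"
  by (simp add: sminus_def site_op_carrier)

lemma diag_sz_carrier: "diag_fun f (sz_string N j) \<in> carrier_mat (dimH N) (dimH N)"
  by (simp add: diag_fun_def sz_string_dim)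

lemma cdag_carrier: "cdag N j \<in> carrier_mat (dimH N) (dimH N)"
  unfolding cdag_def by (rule smult_carrier_mat, rule mult_carrier_mat[OF diag_sz_carrier splus_carrier])
lemma cann_carrier: "cann N j \<in> carrier_mat (dimH N) (dimH N)"
  unfolding cann_def by (rule smult_carrier_mat, rule mult_carrier_mat[OF diag_sz_carrier sminus_carrier])

lemma cdag_entry:
  assumes "r < dimH N" "c < dimH N"
  shows "cdag N j $$ (r, c) = \<i> ^ (j - 1) * \<i> powr (Sc r j) * splus N j $$ (r, c)"
proof -
  have e: "(diag_fun (\<lambda>x. \<i> powr x) (sz_string N j) * splus N j) $$ (r, c)
     = \<i> powr (sz_string N j $$ (r, r)) * splus N j $$ (r, c)"
    by (rule diag_mult_entry[OF sz_string_dim splus_carrier assms])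
  have d: "dim_row (diag_fun (\<lambda>x. \<i> powr x) (sz_string N j) * splus N j) = dimH N"
          "dim_col (diag_fun (\<lambda>x. \<i> powr x) (sz_string N j) * splus N j) = dimH N"
    using splus_carrier[of N j] by (auto simp: diag_fun_def sz_string_dim)
  show ?thesis unfolding cdag_def using e d assms by (simp add: sz_string_diag)
qed

lemma cann_entry:
  assumes "r < dimH N" "c < dimH N"
  shows "cann N j $$ (r, c) = \<i> powi (1 - int j) * \<i> powr (- Sc r j) * sminus N j $$ (r, c)"
proof -
  have e: "(diag_fun (\<lambda>x. \<i> powr - x) (sz_string N j) * sminus N j) $$ (r, c)
     = \<i> powr (- sz_string N j $$ (r, r)) * sminus N j $$ (r, c)"
    by (rule diag_mult_entry[OF sz_string_dim sminus_carrier assms])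
  have d: "dim_row (diag_fun (\<lambda>x. \<i> powr - x) (sz_string N j) * sminus N j) = dimH N"
          "dim_col (diag_fun (\<lambda>x. \<i> powr - x) (sz_string N j) * sminus N j) = dimH N"
    using sminus_carrier[of N j] by (auto simp: diag_fun_def sz_string_dim)
  show ?thesis unfolding cann_def using e d assms by (simp add: sz_string_diag)
qed



definition flipk :: "nat \<Rightarrow> nat \<Rightarrow> nat \<Rightarrow> nat \<Rightarrow> nat" where
  "flipk N p v r = bnum N (\<lambda>i. if i = p then v else sbit r i)"

lemma flipk_bit: "v < 2 \<Longrightarrow> i < N \<Longrightarrow> sbit (flipk N p v r) i = (if i = p then v else sbit r i)"
  unfolding flipk_def by (rule bnum_bit) (auto simp: sbit_lt2)

lemma flipk_lt: "v < 2 \<Longrightarrow> flipk N p v r < dimH N"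
  unfolding flipk_def dimH_def by (rule bnum_lt) (auto simp: sbit_lt2)

lemma prod_flip:
  assumes X: "X \<in> carrier_mat (dimH N) (dimH N)" and Y: "Y \<in> carrier_mat (dimH N) (dimH N)"
    and r: "r < dimH N" and c: "c < dimH N" and p: "p < N" and v: "v < 2"
    and Xe: "\<And>r k. r < dimH N \<Longrightarrow> k < dimH N \<Longrightarrow>
       X $$ (r, k) = (if agree N {p} r k \<and> sbit r p = u \<and> sbit k p = v then \<alpha> r else 0)"
  shows "(X * Y) $$ (r, c) = (if sbit r p = u then \<alpha> r * Y $$ (flipk N p v r, c) else 0)"
proof -
  define k0 where "k0 = flipk N p v r"
  have k0: "k0 < dimH N" unfolding k0_def by (rule flipk_lt[OF v])
  have bk: "\<And>i. i < N \<Longrightarrow> sbit k0 i = (if i = p then v else sbit r i)"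
    unfolding k0_def by (rule flipk_bit[OF v])
  have "(X * Y) $$ (r, c) = X $$ (r, k0) * Y $$ (k0, c)"
  proof (rule mult_entry_single[OF X Y r c k0])
    fix k assume k: "k < dimH N" "k \<noteq> k0"
    show "X $$ (r, k) * Y $$ (k, c) = 0"
    proof (cases "agree N {p} r k \<and> sbit k p = v")
      case True
      have "k = k0"
      proof (rule bits_eq[of k N k0])
        show "k < 2^N" "k0 < 2^N" using k k0 by (auto simp: dimH_def)
        fix i assume i: "i < N"
        show "sbit k i = sbit k0 i" using True i bk[OF i] unfolding agree_def by auto
      qed
      then show ?thesis using k by simp
    next
      case False
      then show ?thesis using Xe[OF r k(1)] by auto
    qed
  qed
  moreover have "agree N {p} r k0" using bk unfolding agree_def by auto
  moreover have "sbit k0 p = v" using bk p by simp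
  ultimately show ?thesis using Xe[OF r k0] unfolding k0_def by auto
qed

lemma agree_k0:
  assumes "p < N" "q \<noteq> p" "v < 2"
  shows "agree N {q} (flipk N p v r) c \<longleftrightarrow> agree N {p, q} r c \<and> sbit c p = v"
  using assms flipk_bit[OF assms(3)] unfolding agree_def by (metis insert_iff singletonD)

lemma agree_k0_same:
  assumes "v < 2"
  shows "agree N {p} (flipk N p v r) c \<longleftrightarrow> agree N {p} r c"
  using assms flipk_bit[OF assms(1)] unfolding agree_def by auto

lemma agree_split:
  assumes "q < N" "q \<noteq> p"
  shows "agree N {p} r c \<longleftrightarrow> agree N {p, q} r c \<and> sbit r q = sbit c q"
  using assms unfolding agree_def by auto

lemma Sc_cong: "(\<And>i. i + 1 < j \<Longrightarrow> sbit r i = sbit r' i) \<Longrightarrow> Sc r j = Sc r' j"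
  unfolding Sc_def by (intro sum.cong) auto

lemma Sc_Suc: "1 \<le> j \<Longrightarrow> Sc r (Suc j) = Sc r j + (if sbit r (j - 1) = 0 then 1 else -1)"
  unfolding Sc_def by simp

lemma Sc_flipk: "j \<le> N \<Longrightarrow> p + 1 \<ge> j \<Longrightarrow> v < 2 \<Longrightarrow> Sc (flipk N p v r) j = Sc r j"
  by (rule Sc_cong) (simp add: flipk_bit)

lemma powi_comb: "\<i> powi (1 - int j) * \<i> ^ j = \<i>"
proof -
  have "\<i> powi (1 - int j + int j) = \<i> powi (1 - int j) * \<i> powi (int j)"
    by (subst power_int_add) auto
  then show ?thesis by (simp add: power_int_of_nat)
qed

lemma powr_comb: "(\<i>::complex) powr (- S) * \<i> powr (S + 1) = \<i>"
proof -
  have "(\<i>::complex) powr (- S + (S + 1)) = \<i> powr (- S) * \<i> powr (S + 1)"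
    by (subst powr_add) auto
  then show ?thesis by (simp add: powr_to_1)
qed

lemma powr_comb0: "(\<i>::complex) powr S * \<i> powr (- S) = 1"
proof -
  have "(\<i>::complex) powr (S + - S) = \<i> powr S * \<i> powr (- S)"
    by (subst powr_add) auto
  then show ?thesis by simp
qed

lemma powi_comb2: "1 \<le> j \<Longrightarrow> \<i> powi (1 - int (j + 1)) * \<i> ^ (j - 1) = - \<i>"
proof -
  assume j: "1 \<le> j"
  then obtain m where m: "j = Suc m" by (cases j) auto
  have "\<i> powi (- 1 - int m + int m) = \<i> powi (- 1 - int m) * \<i> powi (int m)"
    by (subst power_int_add) auto
  moreover have "1 - int (j + 1) = - 1 - int m" using m by simp
  ultimately show ?thesis using m by (simp add: power_int_of_nat power_int_minus)
qed

lemma powr_comb2: "(\<i>::complex) powr (- (S + 1)) * \<i> powr S = - \<i>"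
proof -
  have "(\<i>::complex) powr (- (S + 1) + S) = \<i> powr (- (S + 1)) * \<i> powr S"
    by (subst powr_add) auto
  moreover have "- (S + 1) + S = - 1" by simp
  ultimately show ?thesis by (simp add: powr_minus powr_to_1)
qed

lemma powi_comb3: "1 \<le> j \<Longrightarrow> \<i> ^ (j - 1) * \<i> powi (1 - int j) = 1"
proof -
  assume j: "1 \<le> j"
  then obtain m where m: "j = Suc m" by (cases j) auto
  have "\<i> powi (int m + (- int m)) = \<i> powi (int m) * \<i> powi (- int m)"
    by (subst power_int_add) auto
  moreover have "1 - int j = - int m" using m by simp
  ultimately show ?thesis using m by (simp add: power_int_of_nat)
qed

lemma powi_comb4: "\<i> ^ j * \<i> powi (1 - int (j + 1)) = 1"
proof -
  have "\<i> powi (int j + (1 - int (j + 1))) = \<i> powi (int j) * \<i> powi (1 - int (j + 1))"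
    by (subst power_int_add) auto
  moreover have "int j + (1 - int (j + 1)) = 0" by simp
  ultimately show ?thesis by (simp add: power_int_of_nat)
qed

lemma term1:
  assumes j: "1 \<le> j" "j < N" and r: "r < dimH N" and c: "c < dimH N"
  shows "(cann N j * cdag N (j + 1)) $$ (r, c) =
    (if agree N {j - 1, j} r c \<and> sbit r (j - 1) = 1 \<and> sbit r j = 0 \<and> sbit c (j - 1) = 0 \<and> sbit c j = 1
     then -1 else 0)"
proof -
  define k0 where "k0 = flipk N (j - 1) 0 r"
  have k0: "k0 < dimH N" unfolding k0_def by (rule flipk_lt) simp
  have P: "(cann N j * cdag N (j + 1)) $$ (r, c) =
     (if sbit r (j - 1) = 1 then (\<i> powi (1 - int j) * \<i> powr (- Sc r j)) * cdag N (j + 1) $$ (k0, c) else 0)"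
    unfolding k0_def
  proof (rule prod_flip[OF cann_carrier cdag_carrier r c])
    show "j - 1 < N" "(0::nat) < 2" using j by auto
    fix r k assume "r < dimH N" "k < dimH N"
    then show "cann N j $$ (r, k) = (if agree N {j - 1} r k \<and> sbit r (j - 1) = 1 \<and> sbit k (j - 1) = 0
        then \<i> powi (1 - int j) * \<i> powr - Sc r j else 0)"
      by (simp add: cann_entry sminus_entry)
  qed
  have b1: "sbit k0 (j - 1) = 0" "sbit k0 j = sbit r j" using j unfolding k0_def by (auto simp: flipk_bit)
  have Sk: "Sc k0 (Suc j) = Sc r j + 1"
  proof -
    have "Sc k0 (Suc j) = Sc k0 j + 1" using Sc_Suc[OF j(1), of k0] b1 by simp
    moreover have "Sc k0 j = Sc r j" unfolding k0_def using j by (intro Sc_flipk) auto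
    ultimately show ?thesis by simp
  qed
  have ag: "agree N {j} k0 c \<longleftrightarrow> agree N {j - 1, j} r c \<and> sbit c (j - 1) = 0"
    unfolding k0_def using j by (intro agree_k0) auto
  have Y: "cdag N (j + 1) $$ (k0, c) = \<i> ^ j * \<i> powr (Sc r j + 1) *
     (if agree N {j - 1, j} r c \<and> sbit c (j - 1) = 0 \<and> sbit r j = 0 \<and> sbit c j = 1 then 1 else 0)"
    using k0 c by (simp add: cdag_entry splus_entry Sk ag b1)
  have ph: "(\<i> powi (1 - int j) * \<i> powr (- Sc r j)) * (\<i> ^ j * \<i> powr (Sc r j + 1)) = -1"
  proof -
    have "(\<i> powi (1 - int j) * \<i> powr (- Sc r j)) * (\<i> ^ j * \<i> powr (Sc r j + 1))
        = (\<i> powi (1 - int j) * \<i> ^ j) * (\<i> powr (- Sc r j) * \<i> powr (Sc r j + 1))"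
      by (simp add: algebra_simps)
    also have "\<dots> = -1" by (simp add: powi_comb powr_comb)
    finally show ?thesis .
  qed
  show ?thesis unfolding P Y using ph by (auto simp: algebra_simps)
qed


lemma term2:
  assumes j: "1 \<le> j" "j < N" and r: "r < dimH N" and c: "c < dimH N"
  shows "(cann N (j + 1) * cdag N j) $$ (r, c) =
    (if agree N {j - 1, j} r c \<and> sbit r (j - 1) = 0 \<and> sbit r j = 1 \<and> sbit c (j - 1) = 1 \<and> sbit c j = 0
     then -1 else 0)"
proof -
  define k0 where "k0 = flipk N j 0 r"
  have k0: "k0 < dimH N" unfolding k0_def by (rule flipk_lt) simp
  have P: "(cann N (j + 1) * cdag N j) $$ (r, c) =
     (if sbit r j = 1 then (\<i> powi (1 - int (j + 1)) * \<i> powr (- Sc r (j + 1))) * cdag N j $$ (k0, c) else 0)"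
    unfolding k0_def
  proof (rule prod_flip[OF cann_carrier cdag_carrier r c])
    show "j < N" "(0::nat) < 2" using j by auto
    fix r k assume "r < dimH N" "k < dimH N"
    then show "cann N (j + 1) $$ (r, k) = (if agree N {j} r k \<and> sbit r j = 1 \<and> sbit k j = 0
        then \<i> powi (1 - int (j + 1)) * \<i> powr - Sc r (j + 1) else 0)"
      by (simp add: cann_entry sminus_entry)
  qed
  have b1: "sbit k0 (j - 1) = sbit r (j - 1)" "sbit k0 j = 0" using j unfolding k0_def by (auto simp: flipk_bit)
  have Sk: "Sc k0 j = Sc r j" unfolding k0_def using j by (intro Sc_flipk) auto
  have Sr: "Sc r (j + 1) = Sc r j + (if sbit r (j - 1) = 0 then 1 else -1)" using Sc_Suc[OF j(1)] by simp
  have ag: "agree N {j - 1} k0 c \<longleftrightarrow> agree N {j, j - 1} r c \<and> sbit c j = 0"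
    unfolding k0_def using j by (intro agree_k0) auto
  have ins: "{j, j - 1} = {j - 1, j}" by auto
  have Y: "cdag N j $$ (k0, c) = \<i> ^ (j - 1) * \<i> powr (Sc r j) *
     (if agree N {j - 1, j} r c \<and> sbit c j = 0 \<and> sbit r (j - 1) = 0 \<and> sbit c (j - 1) = 1 then 1 else 0)"
    using k0 c ag b1 ins by (simp add: cdag_entry splus_entry Sk)
  have ph: "sbit r (j - 1) = 0 \<Longrightarrow> (\<i> powi (1 - int (j + 1)) * \<i> powr (- Sc r (j + 1))) * (\<i> ^ (j - 1) * \<i> powr (Sc r j)) = -1"
  proof -
    assume "sbit r (j - 1) = 0"
    then have "Sc r (j + 1) = Sc r j + 1" using Sr by simp
    then have "(\<i> powi (1 - int (j + 1)) * \<i> powr (- Sc r (j + 1))) * (\<i> ^ (j - 1) * \<i> powr (Sc r j))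
        = (\<i> powi (1 - int (j + 1)) * \<i> ^ (j - 1)) * (\<i> powr (- (Sc r j + 1)) * \<i> powr (Sc r j))"
      by (simp add: algebra_simps)
    also have "\<dots> = -1" unfolding powi_comb2[OF j(1)] powr_comb2 by simp
    finally show ?thesis .
  qed
  show ?thesis unfolding P Y using ph by (auto simp: algebra_simps)
qed

lemma term3:
  assumes j: "1 \<le> j" "j < N" and r: "r < dimH N" and c: "c < dimH N"
  shows "(cdag N j * cann N j) $$ (r, c) =
    (if agree N {j - 1, j} r c \<and> sbit r j = sbit c j \<and> sbit r (j - 1) = 0 \<and> sbit c (j - 1) = 0
     then 1 else 0)"
proof -
  define k0 where "k0 = flipk N (j - 1) 1 r"
  have k0: "k0 < dimH N" unfolding k0_def by (rule flipk_lt) simp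
  have P: "(cdag N j * cann N j) $$ (r, c) =
     (if sbit r (j - 1) = 0 then (\<i> ^ (j - 1) * \<i> powr (Sc r j)) * cann N j $$ (k0, c) else 0)"
    unfolding k0_def
  proof (rule prod_flip[OF cdag_carrier cann_carrier r c])
    show "j - 1 < N" "(1::nat) < 2" using j by auto
    fix r k assume "r < dimH N" "k < dimH N"
    then show "cdag N j $$ (r, k) = (if agree N {j - 1} r k \<and> sbit r (j - 1) = 0 \<and> sbit k (j - 1) = 1
        then \<i> ^ (j - 1) * \<i> powr (Sc r j) else 0)"
      by (simp add: cdag_entry splus_entry)
  qed
  have b1: "sbit k0 (j - 1) = 1" using j unfolding k0_def by (auto simp: flipk_bit)
  have Sk: "Sc k0 j = Sc r j" unfolding k0_def using j by (intro Sc_flipk) auto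
  have ag: "agree N {j - 1} k0 c \<longleftrightarrow> agree N {j - 1, j} r c \<and> sbit r j = sbit c j"
    unfolding k0_def using agree_k0_same[of 1 N "j - 1" r c] agree_split[of j N "j - 1" r c] j by simp
  have Y: "cann N j $$ (k0, c) = \<i> powi (1 - int j) * \<i> powr (- Sc r j) *
     (if agree N {j - 1, j} r c \<and> sbit r j = sbit c j \<and> sbit c (j - 1) = 0 then 1 else 0)"
    using k0 c ag b1 by (simp add: cann_entry sminus_entry Sk)
  have ph: "(\<i> ^ (j - 1) * \<i> powr (Sc r j)) * (\<i> powi (1 - int j) * \<i> powr (- Sc r j)) = 1"
  proof -
    have "(\<i> ^ (j - 1) * \<i> powr (Sc r j)) * (\<i> powi (1 - int j) * \<i> powr (- Sc r j))
       = (\<i> ^ (j - 1) * \<i> powi (1 - int j)) * (\<i> powr (Sc r j) * \<i> powr (- Sc r j))"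
      by (simp add: algebra_simps)
    also have "\<dots> = 1" unfolding powi_comb3[OF j(1)] powr_comb0 by simp
    finally show ?thesis .
  qed
  show ?thesis unfolding P Y using ph by (auto simp: algebra_simps)
qed

lemma term4:
  assumes j: "1 \<le> j" "j < N" and r: "r < dimH N" and c: "c < dimH N"
  shows "(cdag N (j + 1) * cann N (j + 1)) $$ (r, c) =
    (if agree N {j - 1, j} r c \<and> sbit r (j - 1) = sbit c (j - 1) \<and> sbit r j = 0 \<and> sbit c j = 0
     then 1 else 0)"
proof -
  define k0 where "k0 = flipk N j 1 r"
  have k0: "k0 < dimH N" unfolding k0_def by (rule flipk_lt) simp
  have P: "(cdag N (j + 1) * cann N (j + 1)) $$ (r, c) =
     (if sbit r j = 0 then (\<i> ^ j * \<i> powr (Sc r (j + 1))) * cann N (j + 1) $$ (k0, c) else 0)"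
    unfolding k0_def
  proof (rule prod_flip[OF cdag_carrier cann_carrier r c])
    show "j < N" "(1::nat) < 2" using j by auto
    fix r k assume "r < dimH N" "k < dimH N"
    then show "cdag N (j + 1) $$ (r, k) = (if agree N {j} r k \<and> sbit r j = 0 \<and> sbit k j = 1
        then \<i> ^ j * \<i> powr (Sc r (j + 1)) else 0)"
      by (simp add: cdag_entry splus_entry)
  qed
  have b1: "sbit k0 j = 1" using j unfolding k0_def by (auto simp: flipk_bit)
  have Sk: "Sc k0 (Suc j) = Sc r (Suc j)" unfolding k0_def using j by (intro Sc_flipk) auto
  have ins: "{j, j - 1} = {j - 1, j}" by auto
  have ag: "agree N {j} k0 c \<longleftrightarrow> agree N {j - 1, j} r c \<and> sbit r (j - 1) = sbit c (j - 1)"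
    unfolding k0_def using j agree_k0_same agree_split[of "j - 1" N j r c] ins by simp
  have Y: "cann N (j + 1) $$ (k0, c) = \<i> powi (1 - int (j + 1)) * \<i> powr (- Sc r (j + 1)) *
     (if agree N {j - 1, j} r c \<and> sbit r (j - 1) = sbit c (j - 1) \<and> sbit c j = 0 then 1 else 0)"
    using k0 c ag b1 by (simp add: cann_entry sminus_entry Sk)
  have ph: "(\<i> ^ j * \<i> powr (Sc r (j + 1))) * (\<i> powi (1 - int (j + 1)) * \<i> powr (- Sc r (j + 1))) = 1"
  proof -
    have "(\<i> ^ j * \<i> powr (Sc r (j + 1))) * (\<i> powi (1 - int (j + 1)) * \<i> powr (- Sc r (j + 1)))
       = (\<i> ^ j * \<i> powi (1 - int (j + 1))) * (\<i> powr (Sc r (j + 1)) * \<i> powr (- Sc r (j + 1)))"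
      by (simp add: algebra_simps)
    also have "\<dots> = 1" by (simp only: powi_comb4 powr_comb0) simp
    finally show ?thesis .
  qed
  show ?thesis unfolding P Y using ph by (auto simp: algebra_simps)
qed

definition gloc :: "nat \<Rightarrow> nat \<Rightarrow> nat \<Rightarrow> nat \<Rightarrow> complex" where
  "gloc x y x' y' = (if x = 1 \<and> y = 0 \<and> x' = 0 \<and> y' = 1 then -1 else 0)
     + (if x = 0 \<and> y = 1 \<and> x' = 1 \<and> y' = 0 then -1 else 0)
     + \<i> * ((if y = y' \<and> x = 0 \<and> x' = 0 then 1 else 0) - (if x = x' \<and> y = 0 \<and> y' = 0 then 1 else 0))"

lemma cdag_dims[simp]: "dim_row (cdag N j) = dimH N" "dim_col (cdag N j) = dimH N"
  using cdag_carrier[of N j] by auto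
lemma cann_dims[simp]: "dim_row (cann N j) = dimH N" "dim_col (cann N j) = dimH N"
  using cann_carrier[of N j] by auto

lemma e_carrier: "e_gen N j \<in> carrier_mat (dimH N) (dimH N)"
  unfolding e_gen_def carrier_mat_def by simp

lemma e_entry:
  assumes j: "1 \<le> j" "j < N" and r: "r < dimH N" and c: "c < dimH N"
  shows "e_gen N j $$ (r, c) =
    (if agree N {j - 1, j} r c then gloc (sbit r (j - 1)) (sbit r j) (sbit c (j - 1)) (sbit c j) else 0)"
proof -
  have "e_gen N j $$ (r, c) = (cann N j * cdag N (j + 1)) $$ (r, c) + (cann N (j + 1) * cdag N j) $$ (r, c)
     + \<i> * ((cdag N j * cann N j) $$ (r, c) - (cdag N (j + 1) * cann N (j + 1)) $$ (r, c))"
    unfolding e_gen_def using r c by simp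
  also have "\<dots> = (if agree N {j - 1, j} r c then gloc (sbit r (j - 1)) (sbit r j) (sbit c (j - 1)) (sbit c j) else 0)"
    unfolding term1[OF j r c] term2[OF j r c] term3[OF j r c] term4[OF j r c] gloc_def
    by auto
  finally show ?thesis .
qed

lemma e_local:
  assumes j: "1 \<le> j" "j < N"
  shows "local_op N {j - 1, j} (e_gen N j)"
  unfolding local_op_def
  using e_carrier e_entry[OF j] by simp

lemma e_commute:
  assumes "1 \<le> j" "j < N" "1 \<le> l" "l < N" "j + 1 < l \<or> l + 1 < j"
  shows "e_gen N j * e_gen N l = e_gen N l * e_gen N j"
  by (rule local_commute[OF e_local e_local]) (use assms in auto)



lemma trig1: fixes k J t :: real shows "cos (2*k*(J+1)*t) - cos (2*k*J*t) = - 2 * sin (k*t) * sin (k*(2*J+1)*t)"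
proof -
  have "cos (2*k*(J+1)*t) - cos (2*k*J*t) = 2 * sin ((2*k*(J+1)*t + 2*k*J*t) / 2) * sin ((2*k*J*t - 2*k*(J+1)*t) / 2)"
    by (rule cos_diff_cos)
  moreover have "(2*k*(J+1)*t + 2*k*J*t) / 2 = k*(2*J+1)*t" by (simp add: algebra_simps)
  moreover have "(2*k*J*t - 2*k*(J+1)*t) / 2 = - (k*t)" by (simp add: algebra_simps)
  ultimately show ?thesis by simp
qed

lemma trig2: fixes x y J t :: real shows "cos (2*x*J*t) * cos (2*y*(J+1)*t) - cos (2*x*(J+1)*t) * cos (2*y*J*t)
  = sin ((x-y)*t) * sin ((x+y)*(2*J+1)*t) + sin ((x+y)*t) * sin ((x-y)*(2*J+1)*t)"
proof -
  have e1: "cos ((x+y)*t - (x-y)*(2*J+1)*t) = cos (2*x*J*t - 2*y*(J+1)*t)"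
  proof -
    have "(x+y)*t - (x-y)*(2*J+1)*t = - (2*x*J*t - 2*y*(J+1)*t)" by (simp add: algebra_simps)
    then show ?thesis by (metis cos_minus)
  qed
  have e2: "cos ((x-y)*t - (x+y)*(2*J+1)*t) = cos (2*x*J*t + 2*y*(J+1)*t)"
  proof -
    have "(x-y)*t - (x+y)*(2*J+1)*t = - (2*x*J*t + 2*y*(J+1)*t)" by (simp add: algebra_simps)
    then show ?thesis by (metis cos_minus)
  qed
  have e3: "(x+y)*t + (x-y)*(2*J+1)*t = 2*x*(J+1)*t - 2*y*J*t" by (simp add: algebra_simps)
  have e4: "(x-y)*t + (x+y)*(2*J+1)*t = 2*x*(J+1)*t + 2*y*J*t" by (simp add: algebra_simps)
  show ?thesis
    unfolding cos_times_cos sin_times_sin e1 e2 e3 e4 by (simp add: field_simps)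
qed



definition acoef :: "nat \<Rightarrow> int \<Rightarrow> nat \<Rightarrow> complex" where
  "acoef N n j = complex_of_real (cos (pi * real_of_int n * real j / real N))"

lemma H0_carrier: "H0 N n \<in> carrier_mat (dimH N) (dimH N)"
  by (simp add: H0_def op_sum_def)

lemma H0_dims[simp]: "dim_row (H0 N n) = dimH N" "dim_col (H0 N n) = dimH N"
  by (simp_all add: H0_def op_sum_def)

lemma e_dims[simp]: "dim_row (e_gen N j) = dimH N" "dim_col (e_gen N j) = dimH N"
  using e_carrier[of N j] by auto

lemma H0_entry: "r < dimH N \<Longrightarrow> c < dimH N \<Longrightarrow>
  H0 N n $$ (r, c) = (\<Sum>j\<in>{1..N-1}. acoef N n j * e_gen N j $$ (r, c))"
  by (simp add: H0_def op_sum_def acoef_def)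

definition Pe :: "nat \<Rightarrow> nat \<Rightarrow> nat \<Rightarrow> nat \<Rightarrow> nat \<Rightarrow> complex" where
  "Pe N j l r c = (e_gen N j * e_gen N l) $$ (r, c)"

lemma HH_entry:
  assumes r: "r < dimH N" and c: "c < dimH N"
  shows "(H0 N n * H0 N m) $$ (r, c) =
    (\<Sum>j\<in>{1..N-1}. \<Sum>l\<in>{1..N-1}. acoef N n j * acoef N m l * Pe N j l r c)"
proof -
  let ?J = "{1..N-1}" and ?D = "dimH N"
  have "(H0 N n * H0 N m) $$ (r, c) = (\<Sum>k<?D. H0 N n $$ (r, k) * H0 N m $$ (k, c))"
    by (rule mult_entry[OF H0_carrier H0_carrier r c])
  also have "\<dots> = (\<Sum>k<?D. \<Sum>j\<in>?J. \<Sum>l\<in>?J. acoef N n j * acoef N m l * (e_gen N j $$ (r, k) * e_gen N l $$ (k, c)))"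
  proof (rule sum.cong[OF refl])
    fix k assume "k \<in> {..<?D}"
    then have k: "k < ?D" by simp
    show "H0 N n $$ (r, k) * H0 N m $$ (k, c) =
       (\<Sum>j\<in>?J. \<Sum>l\<in>?J. acoef N n j * acoef N m l * (e_gen N j $$ (r, k) * e_gen N l $$ (k, c)))"
      unfolding H0_entry[OF r k] H0_entry[OF k c] sum_product
      by (simp add: algebra_simps)
  qed
  also have "\<dots> = (\<Sum>j\<in>?J. \<Sum>k<?D. \<Sum>l\<in>?J. acoef N n j * acoef N m l * (e_gen N j $$ (r, k) * e_gen N l $$ (k, c)))"
    by (rule sum.swap)
  also have "\<dots> = (\<Sum>j\<in>?J. \<Sum>l\<in>?J. \<Sum>k<?D. acoef N n j * acoef N m l * (e_gen N j $$ (r, k) * e_gen N l $$ (k, c)))"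
    by (rule sum.cong[OF refl], rule sum.swap)
  also have "\<dots> = (\<Sum>j\<in>?J. \<Sum>l\<in>?J. acoef N n j * acoef N m l * Pe N j l r c)"
    unfolding Pe_def mult_entry[OF e_carrier e_carrier r c] sum_distrib_left by simp
  finally show ?thesis .
qed

definition Qe :: "nat \<Rightarrow> nat \<Rightarrow> nat \<Rightarrow> nat \<Rightarrow> nat \<Rightarrow> complex" where
  "Qe N j l r c = Pe N j l r c - Pe N l j r c"

lemma comm_entry1:
  assumes r: "r < dimH N" and c: "c < dimH N"
  shows "comm (H0 N n) (H0 N m) $$ (r, c) =
    (\<Sum>j\<in>{1..N-1}. \<Sum>l\<in>{1..N-1}. acoef N n j * acoef N m l * Qe N j l r c)"
proof -
  let ?J = "{1..N-1}"
  have "comm (H0 N n) (H0 N m) $$ (r, c) = (H0 N n * H0 N m) $$ (r, c) - (H0 N m * H0 N n) $$ (r, c)"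
    unfolding comm_def using r c by simp
  also have "(H0 N m * H0 N n) $$ (r, c) = (\<Sum>j\<in>?J. \<Sum>l\<in>?J. acoef N m j * acoef N n l * Pe N j l r c)"
    by (rule HH_entry[OF r c])
  also have "\<dots> = (\<Sum>l\<in>?J. \<Sum>j\<in>?J. acoef N m j * acoef N n l * Pe N j l r c)"
    by (rule sum.swap)
  also have "\<dots> = (\<Sum>j\<in>?J. \<Sum>l\<in>?J. acoef N n j * acoef N m l * Pe N l j r c)"
    by (simp add: mult.commute)
  finally show ?thesis
    unfolding HH_entry[OF r c] Qe_def
    by (simp add: sum_subtractf[symmetric] algebra_simps)
qed

lemma Qe_struct:
  assumes j: "j \<in> {1..N-1}" and l: "l \<in> {1..N-1}"
  shows "Qe N j l r c = (if l = j + 1 then Qe N j (j + 1) r c else 0) - (if j = l + 1 then Qe N l (l + 1) r c else 0)"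
proof -
  consider "l = j + 1" | "j = l + 1" | "j = l" | "j + 1 < l \<or> l + 1 < j" by linarith
  then show ?thesis
  proof cases
    case 1 then show ?thesis by simp
  next
    case 2 then show ?thesis by (simp add: Qe_def)
  next
    case 3 then show ?thesis by (simp add: Qe_def)
  next
    case 4
    have "e_gen N j * e_gen N l = e_gen N l * e_gen N j"
      using j l 4 by (intro e_commute) auto
    then have "Qe N j l r c = 0" by (simp add: Qe_def Pe_def)
    then show ?thesis using 4 by auto
  qed
qed

definition Wc :: "nat \<Rightarrow> int \<Rightarrow> int \<Rightarrow> nat \<Rightarrow> nat \<Rightarrow> complex" where
  "Wc N n m r c = (\<Sum>j\<in>{1..N-1}. if j + 1 \<in> {1..N-1} then
      (acoef N n j * acoef N m (j + 1) - acoef N n (j + 1) * acoef N m j) * Qe N j (j + 1) r c else 0)"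

lemma comm_entry:
  assumes r: "r < dimH N" and c: "c < dimH N"
  shows "comm (H0 N n) (H0 N m) $$ (r, c) = Wc N n m r c"
proof -
  let ?J = "{1..N-1}"
  let ?a = "acoef N n" and ?b = "acoef N m" and ?Q = "\<lambda>j. Qe N j (j + 1) r c"
  have "comm (H0 N n) (H0 N m) $$ (r, c) =
     (\<Sum>j\<in>?J. \<Sum>l\<in>?J. ?a j * ?b l * ((if l = j + 1 then ?Q j else 0) - (if j = l + 1 then ?Q l else 0)))"
    unfolding comm_entry1[OF r c] by (intro sum.cong refl) (simp add: Qe_struct)
  also have "\<dots> = (\<Sum>j\<in>?J. \<Sum>l\<in>?J. if l = j + 1 then ?a j * ?b l * ?Q j else 0)
               - (\<Sum>j\<in>?J. \<Sum>l\<in>?J. if j = l + 1 then ?a j * ?b l * ?Q l else 0)"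
  proof -
    have "(\<Sum>j\<in>?J. \<Sum>l\<in>?J. ?a j * ?b l * ((if l = j + 1 then ?Q j else 0) - (if j = l + 1 then ?Q l else 0)))
      = (\<Sum>j\<in>?J. \<Sum>l\<in>?J. (if l = j + 1 then ?a j * ?b l * ?Q j else 0) - (if j = l + 1 then ?a j * ?b l * ?Q l else 0))"
      by (intro sum.cong refl) simp
    then show ?thesis by (simp only: sum_subtractf)
  qed
  also have "(\<Sum>j\<in>?J. \<Sum>l\<in>?J. if l = j + 1 then ?a j * ?b l * ?Q j else 0)
       = (\<Sum>j\<in>?J. if j + 1 \<in> ?J then ?a j * ?b (j + 1) * ?Q j else 0)"
    by (intro sum.cong refl) simp
  also have "(\<Sum>j\<in>?J. \<Sum>l\<in>?J. if j = l + 1 then ?a j * ?b l * ?Q l else 0)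
       = (\<Sum>l\<in>?J. \<Sum>j\<in>?J. if j = l + 1 then ?a j * ?b l * ?Q l else 0)"
    by (rule sum.swap)
  also have "\<dots> = (\<Sum>l\<in>?J. if l + 1 \<in> ?J then ?a (l + 1) * ?b l * ?Q l else 0)"
    by (intro sum.cong refl) simp
  also have "(\<Sum>j\<in>?J. if j + 1 \<in> ?J then ?a j * ?b (j + 1) * ?Q j else 0)
      - (\<Sum>l\<in>?J. if l + 1 \<in> ?J then ?a (l + 1) * ?b l * ?Q l else 0) = Wc N n m r c"
    unfolding Wc_def sum_subtractf[symmetric] by (intro sum.cong refl) (simp add: algebra_simps)
  finally show ?thesis .
qed



lemma coef_real:
  fixes x y J t :: real
  assumes s1: "sin ((x+y)*t) \<noteq> 0" and s2: "sin ((x-y)*t) \<noteq> 0"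
  shows "cos (2*x*J*t) * cos (2*y*(J+1)*t) - cos (2*x*(J+1)*t) * cos (2*y*J*t) =
    2 * sin ((x-y)*t) * (-1 / (4 * sin ((x+y)*t))) * (cos (2*(x+y)*(J+1)*t) - cos (2*(x+y)*J*t))
  + 2 * sin ((x+y)*t) * (-1 / (4 * sin ((x-y)*t))) * (cos (2*(x-y)*(J+1)*t) - cos (2*(x-y)*J*t))"
  unfolding trig1 trig2 using s1 s2 by (simp add: field_simps)

lemma sin_nz:
  assumes N: "N > 0" and nd: "\<not> (2 * int N) dvd k"
  shows "sin (pi * real_of_int k / (2 * real N)) \<noteq> 0"
proof
  assume "sin (pi * real_of_int k / (2 * real N)) = 0"
  then obtain i where i: "pi * real_of_int k / (2 * real N) = real_of_int i * pi"
    by (auto simp: sin_zero_iff_int2)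
  then have "real_of_int k = real_of_int (2 * int N * i)" using N by (simp add: field_simps)
  then have "k = 2 * int N * i" by (simp only: of_int_eq_iff)
  then show False using nd by simp
qed

theorem mainTheorem5:
  fixes N :: nat and n m :: int
  assumes "N \<ge> 2"
    and "\<not> (2 * int N) dvd (n + m)"
    and "\<not> (2 * int N) dvd (n - m)"
  shows "comm (H0 N n) (H0 N m) =
    complex_of_real (2 * sin (pi * real_of_int (n - m) / (2 * real N))) \<cdot>\<^sub>m H1 N (n + m)
    + complex_of_real (2 * sin (pi * real_of_int (n + m) / (2 * real N))) \<cdot>\<^sub>m H1 N (n - m)"
proof -
  have N: "N > 0" using assms(1) by simp
  define t where "t = pi / (2 * real N)"
  define x where "x = real_of_int n"
  define y where "y = real_of_int m"
  have conv1: "\<And>a b. pi * a * b / real N = 2 * a * b * t" using N unfolding t_def by (simp add: field_simps)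
  have conv2: "\<And>k. pi * k / (2 * real N) = k * t" unfolding t_def by simp
  have s1: "sin ((x+y)*t) \<noteq> 0" using sin_nz[OF N assms(2)] conv2 unfolding x_def y_def by simp
  have s2: "sin ((x-y)*t) \<noteq> 0" using sin_nz[OF N assms(3)] conv2 unfolding x_def y_def by simp
  define cR1 where "cR1 = complex_of_real (2 * sin (pi * real_of_int (n - m) / (2 * real N)))"
  define cR2 where "cR2 = complex_of_real (2 * sin (pi * real_of_int (n + m) / (2 * real N)))"
  define cH1 where "cH1 = complex_of_real (- 1 / (4 * sin (pi * real_of_int (n + m) / (2 * real N))))"
  define cH2 where "cH2 = complex_of_real (- 1 / (4 * sin (pi * real_of_int (n - m) / (2 * real N))))"
  have H1e: "\<And>k r c. r < dimH N \<Longrightarrow> c < dimH N \<Longrightarrow>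
     H1 N k $$ (r, c) = complex_of_real (- 1 / (4 * sin (pi * real_of_int k / (2 * real N)))) * Wc N 0 k r c"
  proof -
    fix k r c assume rc: "r < dimH N" "c < dimH N"
    have d: "dim_row (comm (H0 N 0) (H0 N k)) = dimH N" "dim_col (comm (H0 N 0) (H0 N k)) = dimH N"
      by (simp_all add: comm_def)
    show "H1 N k $$ (r, c) = complex_of_real (- 1 / (4 * sin (pi * real_of_int k / (2 * real N)))) * Wc N 0 k r c"
      unfolding H1_def using rc d by (simp add: comm_entry[OF rc])
  qed
  have cid: "\<And>j. acoef N n j * acoef N m (j + 1) - acoef N n (j + 1) * acoef N m j =
     cR1 * cH1 * (acoef N 0 j * acoef N (n + m) (j + 1) - acoef N 0 (j + 1) * acoef N (n + m) j)
   + cR2 * cH2 * (acoef N 0 j * acoef N (n - m) (j + 1) - acoef N 0 (j + 1) * acoef N (n - m) j)"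
  proof -
    fix j :: nat
    define J where "J = real j"
    have R: "cos (2*x*J*t) * cos (2*y*(J+1)*t) - cos (2*x*(J+1)*t) * cos (2*y*J*t) =
      2 * sin ((x-y)*t) * (-1 / (4 * sin ((x+y)*t))) * (cos (2*(x+y)*(J+1)*t) - cos (2*(x+y)*J*t))
    + 2 * sin ((x+y)*t) * (-1 / (4 * sin ((x-y)*t))) * (cos (2*(x-y)*(J+1)*t) - cos (2*(x-y)*J*t))"
      by (rule coef_real[OF s1 s2])
    have a: "acoef N n j = complex_of_real (cos (2*x*J*t))"
            "acoef N m (j + 1) = complex_of_real (cos (2*y*(J+1)*t))"
            "acoef N n (j + 1) = complex_of_real (cos (2*x*(J+1)*t))"
            "acoef N m j = complex_of_real (cos (2*y*J*t))"
            "acoef N 0 j = 1" "acoef N 0 (j + 1) = 1"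
            "acoef N (n + m) (j + 1) = complex_of_real (cos (2*(x+y)*(J+1)*t))"
            "acoef N (n + m) j = complex_of_real (cos (2*(x+y)*J*t))"
            "acoef N (n - m) (j + 1) = complex_of_real (cos (2*(x-y)*(J+1)*t))"
            "acoef N (n - m) j = complex_of_real (cos (2*(x-y)*J*t))"
      unfolding acoef_def conv1 x_def y_def J_def by (simp_all add: add.commute)
    have c: "cR1 = complex_of_real (2 * sin ((x-y)*t))" "cR2 = complex_of_real (2 * sin ((x+y)*t))"
            "cH1 = complex_of_real (-1 / (4 * sin ((x+y)*t)))" "cH2 = complex_of_real (-1 / (4 * sin ((x-y)*t)))"
      unfolding cR1_def cR2_def cH1_def cH2_def conv2 x_def y_def by simp_all
    have "complex_of_real (cos (2*x*J*t) * cos (2*y*(J+1)*t) - cos (2*x*(J+1)*t) * cos (2*y*J*t)) =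
      complex_of_real (2 * sin ((x-y)*t) * (-1 / (4 * sin ((x+y)*t))) * (cos (2*(x+y)*(J+1)*t) - cos (2*(x+y)*J*t))
    + 2 * sin ((x+y)*t) * (-1 / (4 * sin ((x-y)*t))) * (cos (2*(x-y)*(J+1)*t) - cos (2*(x-y)*J*t)))"
      using R by simp
    then show "?thesis j" unfolding a c by simp
  qed
  show ?thesis unfolding cR1_def[symmetric] cR2_def[symmetric]
  proof (rule eq_matI)
    show "dim_row (comm (H0 N n) (H0 N m)) = dim_row (cR1 \<cdot>\<^sub>m H1 N (n + m) + cR2 \<cdot>\<^sub>m H1 N (n - m))"
      "dim_col (comm (H0 N n) (H0 N m)) = dim_col (cR1 \<cdot>\<^sub>m H1 N (n + m) + cR2 \<cdot>\<^sub>m H1 N (n - m))"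
      by (simp_all add: comm_def H1_def)
  next
    fix r c assume "r < dim_row (cR1 \<cdot>\<^sub>m H1 N (n + m) + cR2 \<cdot>\<^sub>m H1 N (n - m))"
      "c < dim_col (cR1 \<cdot>\<^sub>m H1 N (n + m) + cR2 \<cdot>\<^sub>m H1 N (n - m))"
    then have r: "r < dimH N" and c: "c < dimH N" by (simp_all add: H1_def comm_def)
    have "(cR1 \<cdot>\<^sub>m H1 N (n + m) + cR2 \<cdot>\<^sub>m H1 N (n - m)) $$ (r, c)
       = cR1 * (cH1 * Wc N 0 (n + m) r c) + cR2 * (cH2 * Wc N 0 (n - m) r c)"
    proof -
      have H1d: "\<And>k. dim_row (H1 N k) = dimH N" "\<And>k. dim_col (H1 N k) = dimH N"
        by (simp_all add: H1_def comm_def)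
      show ?thesis using r c H1d by (simp add: H1e[OF r c] cH1_def cH2_def)
    qed
    also have "\<dots> = Wc N n m r c"
      unfolding Wc_def sum_distrib_left sum.distrib[symmetric] cid
      by (intro sum.cong refl) (simp add: cid algebra_simps)
    also have "\<dots> = comm (H0 N n) (H0 N m) $$ (r, c)" by (rule comm_entry[OF r c, symmetric])
    finally show "comm (H0 N n) (H0 N m) $$ (r, c) = (cR1 \<cdot>\<^sub>m H1 N (n + m) + cR2 \<cdot>\<^sub>m H1 N (n - m)) $$ (r, c)"
      by simp
  qed
qed

end
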